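(* Let $0<\alpha,\beta<\tfrac12$ and $g\in C_b^1(M)$. The Lyapunov exponents of $B_g$ are $\log2$, $\log2$, $\log\alpha$ and $\log\beta$ at almost every point with respect to Lebesgue measure and with respect to the physical measure $\mu_g$.
   Context: $M=[0,1)\times\mathbb R$. $B_\alpha(x,y)=(2x,\alpha y)$ if $0\le x<\tfrac12$ and $(2x-1,\alpha y+1-\alpha)$ if $\tfrac12\le x<1$; likewise $B_\beta$. $C_b^1(M)$: $C^1$ functions on the interior of $M$ with bounded function and derivative. $B_g(x,y,z,w)=(B_\alpha(x,y),B_\beta(z,w)+(0,g(x,y)))$ on $M\times M\subset\mathbb R^4$; it is $C^1$ off the set where $x$ or $z$ is $0$ or a dyadic fraction, with derivative there the matrix with rows $(2,0,0,0)$, $(0,\alpha,0,0)$, $(0,0,2,0)$, $(g_x(x,y),g_y(x,y),0,\beta)$; Lyapunov exponents are computed from this piecewise derivative. $\mu_g=(h_g)_*\mu$ where $\mu=(\mathrm{Leb}\times\nu_\alpha)\times(\mathrm{Leb}\times\nu_\beta)$ on $A=[0,1)\times A_\alpha\times[0,1)\times A_\beta$ ($A_\alpha$ the Cantor set with $A_\alpha=\alpha A_\alpha\cup(\alpha A_\alpha+1-\alpha)$, $\nu_\alpha$ its Cantor measure with mass $1/2$ on each piece, similarly for $\beta$), and $h_g(x,y,z,w)=\big(x,y,z,w+\sum_{i\ge0}\beta^i g(B_\alpha^{-i-1}(x,y))\big)$ with $B_\alpha^{-1}(x,y)=(x/2,y/\alpha)$ if $y\le\tfrac12$, $((x+1)/2,(y-(1-\alpha))/\alpha)$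 if $y>\tfrac12$. *)

theory Defs
  imports "HOL-Probability.Probability"
begin

type_synonym pt = "(real \<times> real) \<times> (real \<times> real)"

definition intM :: "(real \<times> real) set" where
  "intM = {0<..<1} \<times> UNIV"

definition MM :: "pt set" where
  "MM = ({0..<1} \<times> UNIV) \<times> ({0..<1} \<times> UNIV)"

definition Cb1 :: "(real \<times> real \<Rightarrow> real) \<Rightarrow> (real \<times> real \<Rightarrow> real) \<Rightarrow> (real \<times> real \<Rightarrow> real) \<Rightarrow> bool" where
  "Cb1 g gx gy \<longleftrightarrow>
     (\<forall>p\<in>intM. (g has_derivative (\<lambda>(h, k). gx p * h + gy p * k)) (at p)) \<and>
     continuous_on intM gx \<and> continuous_on intM gy \<and>
     (\<exists>C. \<forall>p\<in>intM. \<bar>g p\<bar> \<le> C \<and> \<bar>gx p\<bar> \<le> C \<and> \<bar>gy p\<bar> \<le> C)"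

text \<open>g is only defined on the interior of M; we extend it by 0 (irrelevant on a null set).\<close>
definition gext :: "(real \<times> real \<Rightarrow> real) \<Rightarrow> real \<times> real \<Rightarrow> real" where
  "gext g p = (if p \<in> intM then g p else 0)"

definition Bmap :: "real \<Rightarrow> real \<times> real \<Rightarrow> real \<times> real" where
  "Bmap a = (\<lambda>(x, y). if x < 1/2 then (2*x, a*y) else (2*x - 1, a*y + 1 - a))"

definition Bmap_inv :: "real \<Rightarrow> real \<times> real \<Rightarrow> real \<times> real" where
  "Bmap_inv a = (\<lambda>(x, y). if y \<le> 1/2 then (x/2, y/a) else ((x+1)/2, (y - (1 - a))/a))"

definition Bg :: "real \<Rightarrow> real \<Rightarrow> (real \<times> real \<Rightarrow> real) \<Rightarrow> pt \<Rightarrow> pt" where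
  "Bg a b g = (\<lambda>(p, q). (Bmap a p, Bmap b q + (0, gext g p)))"

definition DBg :: "real \<Rightarrow> real \<Rightarrow> (real \<times> real \<Rightarrow> real) \<Rightarrow> (real \<times> real \<Rightarrow> real) \<Rightarrow> pt \<Rightarrow> pt \<Rightarrow> pt" where
  "DBg a b gx gy = (\<lambda>((x, y), _) ((u1, u2), (u3, u4)).
      ((2*u1, a*u2), (2*u3, gx (x, y) * u1 + gy (x, y) * u2 + b*u4)))"

fun tan_iter :: "(pt \<Rightarrow> pt) \<Rightarrow> (pt \<Rightarrow> pt \<Rightarrow> pt) \<Rightarrow> nat \<Rightarrow> pt \<Rightarrow> pt \<Rightarrow> pt" where
  "tan_iter F DF 0 p v = v"
| "tan_iter F DF (Suc n) p v = DF ((F ^^ n) p) (tan_iter F DF n p v)"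

definition lyap :: "(pt \<Rightarrow> pt) \<Rightarrow> (pt \<Rightarrow> pt \<Rightarrow> pt) \<Rightarrow> pt \<Rightarrow> pt \<Rightarrow> real" where
  "lyap F DF p v = lim (\<lambda>n. ln (norm (tan_iter F DF n p v)) / real n)"

definition has_lyap_spectrum :: "(pt \<Rightarrow> pt) \<Rightarrow> (pt \<Rightarrow> pt \<Rightarrow> pt) \<Rightarrow> pt \<Rightarrow> real multiset \<Rightarrow> bool" where
  "has_lyap_spectrum F DF p L \<longleftrightarrow>
     (\<forall>v. v \<noteq> 0 \<longrightarrow> convergent (\<lambda>n. ln (norm (tan_iter F DF n p v)) / real n)) \<and>
     (\<forall>c. dim {v. v = 0 \<or> lyap F DF p v \<le> c} = size (filter_mset (\<lambda>l. l \<le> c) L))"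

definition leb01 :: "real measure" where
  "leb01 = restrict_space lborel {0..<1}"

text \<open>Cantor measure nu_a on A_a (mass 1/2 on each of the two pieces, self-similar),
  realised as the law of sum_i (1-a) a^i eps_i with eps_i iid fair coin flips.\<close>
definition cantor_measure :: "real \<Rightarrow> real measure" where
  "cantor_measure a = distr (\<Pi>\<^sub>M i\<in>(UNIV :: nat set). measure_pmf (bernoulli_pmf (1/2))) lborel
      (\<lambda>\<omega>. \<Sum>i. (1 - a) * a ^ i * (if \<omega> i then 1 else 0))"

definition hg :: "real \<Rightarrow> real \<Rightarrow> (real \<times> real \<Rightarrow> real) \<Rightarrow> pt \<Rightarrow> pt" where
  "hg a b g = (\<lambda>(p, (z, w)). (p, (z, w + (\<Sum>i. b ^ i * gext g ((Bmap_inv a ^^ Suc i) p)))))"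

definition mu_g :: "real \<Rightarrow> real \<Rightarrow> (real \<times> real \<Rightarrow> real) \<Rightarrow> pt measure" where
  "mu_g a b g = distr ((leb01 \<Otimes>\<^sub>M cantor_measure a) \<Otimes>\<^sub>M (leb01 \<Otimes>\<^sub>M cantor_measure b)) lborel (hg a b g)"

end

theory Submission
  imports Defs "HOL-Real_Asymp.Real_Asymp"
begin


primrec Wseq :: "(nat\<Rightarrow>real) \<Rightarrow> (nat\<Rightarrow>real) \<Rightarrow> real \<Rightarrow> real \<Rightarrow> real \<Rightarrow> real \<Rightarrow> real \<Rightarrow> nat \<Rightarrow> real" where
  "Wseq G H a b u1 u2 u4 0 = u4"
| "Wseq G H a b u1 u2 u4 (Suc n) = G n * (2^n*u1) + H n * (a^n*u2) + b * Wseq G H a b u1 u2 u4 n"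

definition Tv :: "(nat\<Rightarrow>real) \<Rightarrow> (nat\<Rightarrow>real) \<Rightarrow> real \<Rightarrow> real \<Rightarrow> nat \<Rightarrow> pt \<Rightarrow> pt" where
  "Tv G H a b n v = (case v of ((u1,u2),(u3,u4)) \<Rightarrow> ((2^n*u1, a^n*u2),(2^n*u3, Wseq G H a b u1 u2 u4 n)))"

lemma Bg_iter_fst: "fst ((Bg a b g ^^ n) p) = (Bmap a ^^ n) (fst p)"
  by (induction n) (auto simp: Bg_def split: prod.splits)

lemma tan_iter_Tv:
  "tan_iter (Bg a b g) (DBg a b gx gy) n p v =
     Tv (\<lambda>k. gx ((Bmap a ^^ k) (fst p))) (\<lambda>k. gy ((Bmap a ^^ k) (fst p))) a b n v"
proof (induction n)
  case 0
  then show ?case by (auto simp: Tv_def split: prod.splits)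
next
  case (Suc n)
  obtain x y where xy: "(Bmap a ^^ n) (fst p) = (x,y)" by fastforce
  obtain q where q: "(Bg a b g ^^ n) p = ((x,y),q)"
    using Bg_iter_fst[of n a b g p] xy by (metis prod.collapse)
  show ?case using Suc q xy
    by (auto simp: Tv_def DBg_def split: prod.splits)
qed

lemma norm4_le: "norm (((a,b),(c,d))::pt) \<le> \<bar>a\<bar>+\<bar>b\<bar>+\<bar>c\<bar>+\<bar>d\<bar>"
proof -
  have "norm (((a,b),(c,d))::pt) \<le> norm (a,b) + norm (c,d)" by (rule norm_Pair_le)
  also have "\<dots> \<le> (norm a + norm b) + (norm c + norm d)"
    by (intro add_mono norm_Pair_le)
  finally show ?thesis by simp
qed

lemma norm4_ge:
  shows "\<bar>a\<bar> \<le> norm (((a,b),(c,d))::pt)" "\<bar>b\<bar> \<le> norm (((a,b),(c,d))::pt)"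
        "\<bar>c\<bar> \<le> norm (((a,b),(c,d))::pt)" "\<bar>d\<bar> \<le> norm (((a,b),(c,d))::pt)"
proof -
  have 1: "norm (a,b) \<le> norm (((a,b),(c,d))::pt)" "norm (c,d) \<le> norm (((a,b),(c,d))::pt)"
    by (rule norm_fst_le, rule norm_snd_le)
  have "norm a \<le> norm (a,b)" "norm b \<le> norm (a,b)" "norm c \<le> norm (c,d)" "norm d \<le> norm (c,d)"
    by (rule norm_fst_le norm_snd_le)+
  with 1 show "\<bar>a\<bar> \<le> norm (((a,b),(c,d))::pt)" "\<bar>b\<bar> \<le> norm (((a,b),(c,d))::pt)"
        "\<bar>c\<bar> \<le> norm (((a,b),(c,d))::pt)" "\<bar>d\<bar> \<le> norm (((a,b),(c,d))::pt)" by auto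
qed

lemma wbound:
  fixes w :: "nat \<Rightarrow> real"
  assumes "R > 0" "0 \<le> b" "b \<le> R" "0 \<le> D" "\<And>n. \<bar>w (Suc n)\<bar> \<le> D*R^(Suc n) + b*\<bar>w n\<bar>"
  shows "\<bar>w n\<bar> \<le> (\<bar>w 0\<bar> + real n * D) * R^n"
proof (induction n)
  case 0 then show ?case by simp
next
  case (Suc n)
  have "b*\<bar>w n\<bar> \<le> R * ((\<bar>w 0\<bar> + real n * D) * R^n)"
    using Suc assms by (intro mult_mono) auto
  then have "\<bar>w (Suc n)\<bar> \<le> D*R^(Suc n) + R * ((\<bar>w 0\<bar> + real n * D) * R^n)"
    using assms(5)[of n] by linarith
  then show ?case by (simp add: algebra_simps)
qed

lemma lyap_sq:
  fixes N :: "nat \<Rightarrow> real"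
  assumes "c1 > 0" "r > 0" "eventually (\<lambda>n. c1*r^n \<le> N n \<and> N n \<le> c2*(real n+1)*r^n) sequentially"
  shows "(\<lambda>n. ln (N n)/real n) \<longlonglongrightarrow> ln r"
proof -
  from assms(3) obtain n0 where n0: "\<And>n. n \<ge> n0 \<Longrightarrow> c1*r^n \<le> N n \<and> N n \<le> c2*(real n+1)*r^n"
    by (auto simp: eventually_sequentially)
  have c2: "c2 > 0"
  proof -
    have "c1*r^n0 \<le> c2*(real n0+1)*r^n0" using n0[of n0] by auto
    moreover have "c1*r^n0 > 0" using assms by simp
    ultimately have "c2*(real n0+1)*r^n0 > 0" by linarith
    then show ?thesis using assms(2) by (simp add: zero_less_mult_iff)
  qed
  have lo: "(\<lambda>n::nat. (ln c1 + real n * ln r)/real n) \<longlonglongrightarrow> ln r" by real_asymp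
  have hi: "(\<lambda>n::nat. (ln c2 + ln (real n + 1) + real n * ln r)/real n) \<longlonglongrightarrow> ln r" by real_asymp
  show ?thesis
  proof (rule tendsto_sandwich[OF _ _ lo hi])
    show "eventually (\<lambda>n. (ln c1 + real n * ln r)/real n \<le> ln (N n)/real n) sequentially"
      using eventually_ge_at_top[of "Suc n0"]
    proof eventually_elim
      case (elim n)
      then have h: "c1*r^n \<le> N n" using n0[of n] by auto
      have pos: "N n > 0" using h(1) mult_pos_pos[OF assms(1) zero_less_power[OF assms(2), of n]] by linarith
      have "ln c1 + real n * ln r = ln (c1 * r^n)" using assms by (simp add: ln_mult ln_realpow)
      also have "\<dots> \<le> ln (N n)" using h assms pos by (subst ln_le_cancel_iff) auto
      finally show ?case using elim by (intro divide_right_mono) auto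
    qed
    show "eventually (\<lambda>n. ln (N n)/real n \<le> (ln c2 + ln (real n + 1) + real n * ln r)/real n) sequentially"
      using eventually_ge_at_top[of "Suc n0"]
    proof eventually_elim
      case (elim n)
      then have h: "c1*r^n \<le> N n" "N n \<le> c2*(real n+1)*r^n" using n0[of n] by auto
      have pos: "N n > 0" using h(1) assms mult_pos_pos[OF assms(1) zero_less_power[OF assms(2), of n]] by linarith
      have "ln (N n) \<le> ln (c2*(real n+1)*r^n)" using h pos c2 assms by (subst ln_le_cancel_iff) auto
      also have "\<dots> = ln c2 + ln (real n + 1) + real n * ln r" using c2 assms by (simp add: ln_mult ln_realpow)
      finally show ?case using elim by (intro divide_right_mono) auto
    qed
  qed
qed




definition Sser :: "(nat\<Rightarrow>real) \<Rightarrow> real \<Rightarrow> real \<Rightarrow> real" where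
  "Sser H a b = (\<Sum>k. (a/b)^k * H k / b)"

definition lamv :: "(nat\<Rightarrow>real) \<Rightarrow> real \<Rightarrow> real \<Rightarrow> pt \<Rightarrow> real" where
  "lamv H a b v = (case v of ((u1,u2),(u3,u4)) \<Rightarrow>
     if u1 \<noteq> 0 \<or> u3 \<noteq> 0 then ln 2
     else if u2 \<noteq> 0 \<and> (b \<le> a \<or> u4 + Sser H a b * u2 = 0) then ln a else ln b)"

lemma tri3: "\<bar>x*y + z*w + (b::real)*t\<bar> \<le> \<bar>x\<bar>*\<bar>y\<bar> + \<bar>z\<bar>*\<bar>w\<bar> + \<bar>b\<bar>*\<bar>t\<bar>"
proof -
  have "\<bar>x*y+z*w+b*t\<bar> \<le> \<bar>x*y+z*w\<bar> + \<bar>b*t\<bar>" by (rule abs_triangle_ineq)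
  also have "\<dots> \<le> \<bar>x*y\<bar>+\<bar>z*w\<bar>+\<bar>b*t\<bar>" using abs_triangle_ineq[of "x*y" "z*w"] by linarith
  finally show ?thesis by (simp add: abs_mult)
qed

lemma mono_n1: "0 \<le> K \<Longrightarrow> 0 \<le> (r::real) \<Longrightarrow> x \<le> K*r^n \<Longrightarrow> x \<le> K*(real n+1)*r^n"
proof -
  assume h: "0 \<le> K" "0 \<le> r" "x \<le> K*r^n"
  have "0 \<le> K*r^n" using h by simp
  moreover have "0 \<le> K*r^n*real n" using \<open>0 \<le> K*r^n\<close> by simp
  ultimately have "K*r^n \<le> K*r^n*(real n+1)" by (simp add: algebra_simps)
  moreover have "K*(real n+1)*r^n = K*r^n*(real n+1)" by simp
  ultimately show ?thesis using h by linarith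
qed

lemma conv_lam:
  assumes ab: "0<a" "a<1/2" "0<b" "b<1/2"
    and GH: "\<And>k. \<bar>G k\<bar> \<le> C" "\<And>k. \<bar>H k\<bar> \<le> C" and v: "v \<noteq> 0"
  shows "(\<lambda>n. ln (norm (Tv G H a b n v))/real n) \<longlonglongrightarrow> lamv H a b v"
proof -
  obtain u1 u2 u3 u4 where v_eq: "v = ((u1,u2),(u3,u4))" by (metis prod.collapse)
  have C0: "0 \<le> C" using GH(1)[of 0] by linarith
  define W where "W = Wseq G H a b u1 u2 u4"
  have Wsuc: "\<And>k. W (Suc k) = G k * (2^k*u1) + H k * (a^k*u2) + b * W k" by (simp add: W_def)
  have W0: "W 0 = u4" by (simp add: W_def)
  have Tn: "\<And>n. Tv G H a b n v = ((2^n*u1, a^n*u2),(2^n*u3, W n))" by (simp add: Tv_def v_eq W_def)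
  have step: "\<And>k. \<bar>W (Suc k)\<bar> \<le> C * (2^k*\<bar>u1\<bar>) + C * (a^k*\<bar>u2\<bar>) + b*\<bar>W k\<bar>"
  proof -
    fix k
    have "\<bar>W (Suc k)\<bar> \<le> \<bar>G k\<bar> * \<bar>2^k*u1\<bar> + \<bar>H k\<bar> * \<bar>a^k*u2\<bar> + \<bar>b\<bar>*\<bar>W k\<bar>"
      unfolding Wsuc by (rule tri3)
    also have "\<dots> \<le> C * (2^k*\<bar>u1\<bar>) + C * (a^k*\<bar>u2\<bar>) + b*\<bar>W k\<bar>"
    proof -
      have "\<bar>G k\<bar> * \<bar>2^k*u1\<bar> \<le> C * (2^k*\<bar>u1\<bar>)" using GH(1)[of k]
        by (simp add: abs_mult mult_right_mono)
      moreover have "\<bar>H k\<bar> * \<bar>a^k*u2\<bar> \<le> C * (a^k*\<bar>u2\<bar>)" using GH(2)[of k] ab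
        by (simp add: abs_mult mult_right_mono)
      moreover have "\<bar>b\<bar>*\<bar>W k\<bar> = b*\<bar>W k\<bar>" using ab by simp
      ultimately show ?thesis by linarith
    qed
    finally show "\<bar>W (Suc k)\<bar> \<le> C * (2^k*\<bar>u1\<bar>) + C * (a^k*\<bar>u2\<bar>) + b*\<bar>W k\<bar>" .
  qed
  have nle: "norm (Tv G H a b n v) \<le> 2^n*\<bar>u1\<bar> + a^n*\<bar>u2\<bar> + 2^n*\<bar>u3\<bar> + \<bar>W n\<bar>" for n
  proof -
    have "norm (Tv G H a b n v) \<le> \<bar>2^n*u1\<bar> + \<bar>a^n*u2\<bar> + \<bar>2^n*u3\<bar> + \<bar>W n\<bar>"
      unfolding Tn by (rule norm4_le)
    then show ?thesis using ab by (simp add: abs_mult)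
  qed
  have nge: "2^n*\<bar>u1\<bar> \<le> norm (Tv G H a b n v)" "a^n*\<bar>u2\<bar> \<le> norm (Tv G H a b n v)"
    "2^n*\<bar>u3\<bar> \<le> norm (Tv G H a b n v)" "\<bar>W n\<bar> \<le> norm (Tv G H a b n v)" for n
  proof -
    show "2^n*\<bar>u1\<bar> \<le> norm (Tv G H a b n v)" using norm4_ge(1)[where a="2^n*u1" and b="a^n*u2" and c="2^n*u3" and d="W n"]
      unfolding Tn using ab by (simp add: abs_mult)
    show "a^n*\<bar>u2\<bar> \<le> norm (Tv G H a b n v)" using norm4_ge(2)[where a="2^n*u1" and b="a^n*u2" and c="2^n*u3" and d="W n"]
      unfolding Tn using ab by (simp add: abs_mult)
    show "2^n*\<bar>u3\<bar> \<le> norm (Tv G H a b n v)" using norm4_ge(3)[where a="2^n*u1" and b="a^n*u2" and c="2^n*u3" and d="W n"]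
      unfolding Tn using ab by (simp add: abs_mult)
    show "\<bar>W n\<bar> \<le> norm (Tv G H a b n v)" using norm4_ge(4)[where a="2^n*u1" and b="a^n*u2" and c="2^n*u3" and d="W n"]
      unfolding Tn using ab by (simp add: abs_mult)
  qed
  consider (A) "u1 \<noteq> 0 \<or> u3 \<noteq> 0" | (B) "u1 = 0" "u3 = 0" "u2 \<noteq> 0" | (Cc) "u1 = 0" "u3 = 0" "u2 = 0"
    by blast
  then show ?thesis
  proof cases
    case A
    define m where "m = max \<bar>u1\<bar> \<bar>u3\<bar>"
    have m: "m > 0" using A by (auto simp: m_def)
    define D where "D = C*(\<bar>u1\<bar>+\<bar>u2\<bar>)"
    have D0: "D \<ge> 0" using C0 by (simp add: D_def)
    have Wb: "\<bar>W n\<bar> \<le> (\<bar>u4\<bar> + real n * D) * 2^n" for n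
    proof -
      have "\<bar>W n\<bar> \<le> (\<bar>W 0\<bar> + real n * D) * 2^n"
      proof (rule wbound)
        fix k
        have "a^k \<le> 2^k" using ab by (intro power_mono) auto
        then have "C * (a^k*\<bar>u2\<bar>) \<le> C * (2^k*\<bar>u2\<bar>)" using C0 by (intro mult_left_mono mult_right_mono) auto
        moreover have "C * (2^k*\<bar>u1\<bar>) + C * (2^k*\<bar>u2\<bar>) \<le> D * 2^Suc k"
          using D0 C0 by (simp add: D_def algebra_simps)
        ultimately show "\<bar>W (Suc k)\<bar> \<le> D * 2^Suc k + b*\<bar>W k\<bar>" using step[of k] by linarith
      qed (use ab D0 in auto)
      then show ?thesis by (simp add: W0)
    qed
    define K where "K = \<bar>u1\<bar>+\<bar>u2\<bar>+\<bar>u3\<bar>+\<bar>u4\<bar>+D"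
    have lam: "lamv H a b v = ln 2" using A by (simp add: lamv_def v_eq)
    have "(\<lambda>n. ln (norm (Tv G H a b n v))/real n) \<longlonglongrightarrow> ln 2"
    proof (rule lyap_sq[OF m, of 2 _ K])
      show "eventually (\<lambda>n. m*2^n \<le> norm (Tv G H a b n v) \<and> norm (Tv G H a b n v) \<le> K*(real n+1)*2^n) sequentially"
      proof (intro always_eventually allI conjI)
        fix n
        show "m*2^n \<le> norm (Tv G H a b n v)" using nge(1)[of n] nge(3)[of n]
          by (auto simp: m_def max_def mult.commute)
        have "a^n \<le> 2^n" using ab by (intro power_mono) auto
        then have "a^n*\<bar>u2\<bar> \<le> 2^n*\<bar>u2\<bar>" by (intro mult_right_mono) auto
        then have "norm (Tv G H a b n v) \<le> (\<bar>u1\<bar>+\<bar>u2\<bar>+\<bar>u3\<bar>+\<bar>u4\<bar> + real n * D)*2^n"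
          using nle[of n] Wb[of n] by (simp add: algebra_simps)
        also have "\<dots> \<le> K*(real n+1)*2^n"
        proof -
          have "real n * D \<le> real n * K" by (intro mult_left_mono) (auto simp: K_def)
          then have "\<bar>u1\<bar>+\<bar>u2\<bar>+\<bar>u3\<bar>+\<bar>u4\<bar> + real n * D \<le> K + real n * K"
            using D0 unfolding K_def by linarith
          then have "\<bar>u1\<bar>+\<bar>u2\<bar>+\<bar>u3\<bar>+\<bar>u4\<bar> + real n * D \<le> K*(real n+1)"
            by (simp add: algebra_simps)
          then show ?thesis by (intro mult_right_mono) auto
        qed
        finally show "norm (Tv G H a b n v) \<le> K*(real n+1)*2^n" .
      qed
    qed auto
    then show ?thesis using lam by simp
  next
    case B
    have stepB: "\<bar>W (Suc k)\<bar> \<le> C*(a^k*\<bar>u2\<bar>) + b*\<bar>W k\<bar>" for k using step[of k] B by simp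
    have nleB: "norm (Tv G H a b n v) \<le> a^n*\<bar>u2\<bar> + \<bar>W n\<bar>" for n using nle[of n] B by simp
    have u2: "\<bar>u2\<bar> > 0" using B by simp
    consider (ba) "b \<le> a" | (lt) "a < b" by linarith
    then show ?thesis
    proof cases
      case ba
      define D where "D = C*\<bar>u2\<bar>/a"
      have D0: "D \<ge> 0" using C0 ab by (simp add: D_def)
      have Wb: "\<bar>W n\<bar> \<le> (\<bar>u4\<bar> + real n * D) * a^n" for n
      proof -
        have "\<bar>W n\<bar> \<le> (\<bar>W 0\<bar> + real n * D) * a^n"
        proof (rule wbound)
          fix k
          have "C*(a^k*\<bar>u2\<bar>) = D * a^Suc k" using ab by (simp add: D_def field_simps)
          then show "\<bar>W (Suc k)\<bar> \<le> D * a^Suc k + b*\<bar>W k\<bar>" using stepB[of k] by linarith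
        qed (use ab D0 ba in auto)
        then show ?thesis by (simp add: W0)
      qed
      have lam: "lamv H a b v = ln a" using B ba by (simp add: lamv_def v_eq)
      define K where "K = \<bar>u2\<bar>+\<bar>u4\<bar>+D"
      have "(\<lambda>n. ln (norm (Tv G H a b n v))/real n) \<longlonglongrightarrow> ln a"
      proof (rule lyap_sq[OF u2, of a _ K])
        show "eventually (\<lambda>n. \<bar>u2\<bar>*a^n \<le> norm (Tv G H a b n v) \<and> norm (Tv G H a b n v) \<le> K*(real n+1)*a^n) sequentially"
        proof (intro always_eventually allI conjI)
          fix n
          show "\<bar>u2\<bar>*a^n \<le> norm (Tv G H a b n v)" using nge(2)[of n] by (simp add: mult.commute)
          have "norm (Tv G H a b n v) \<le> (\<bar>u2\<bar>+\<bar>u4\<bar> + real n * D)*a^n"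
            using nleB[of n] Wb[of n] by (simp add: algebra_simps)
          also have "\<dots> \<le> K*(real n+1)*a^n"
          proof -
            have "real n * D \<le> real n * K" by (intro mult_left_mono) (auto simp: K_def)
            then have "\<bar>u2\<bar>+\<bar>u4\<bar> + real n * D \<le> K + real n * K"
              using D0 unfolding K_def by linarith
            then have "\<bar>u2\<bar>+\<bar>u4\<bar> + real n * D \<le> K*(real n+1)"
              by (simp add: algebra_simps)
            then show ?thesis using ab by (intro mult_right_mono) auto
          qed
          finally show "norm (Tv G H a b n v) \<le> K*(real n+1)*a^n" .
        qed
      qed (use ab in auto)
      then show ?thesis using lam by simp
    next
      case lt
      note ab = ab lt
      define q where "q = a/b"
      have q: "0 < q" "q < 1" using ab \<open>0<a\<close> by (auto simp: q_def)
      define t where "t k = q^k * H k / b" for k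
      define B where "B = (C/b)/(1-q)"
      have B0: "B \<ge> 0" using C0 q ab by (simp add: B_def)
      have tb: "\<bar>t k\<bar> \<le> (C/b) * q^k" for k
        using GH(2)[of k] q ab by (simp add: t_def abs_mult divide_right_mono mult_left_mono mult.commute)
      have sg: "summable (\<lambda>k. (C/b) * q^k)" using q by (intro summable_mult summable_geometric) auto
      have st: "summable t"
        by (rule summable_comparison_test'[OF sg]) (use tb in auto)
      define S where "S = suminf t"
      have S_eq: "Sser H a b = S" unfolding Sser_def S_def q_def t_def[abs_def] by simp
      have tail: "\<bar>\<Sum>k. t (k+n)\<bar> \<le> B * q^n" for n
      proof -
        have sg2: "summable (\<lambda>k. (C/b) * q^n * q^k)" using q by (intro summable_mult summable_geometric) auto
        have le: "\<bar>t (k+n)\<bar> \<le> (C/b) * q^n * q^k" for k using tb[of "k+n"] by (simp add: power_add mult_ac)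
        have st2: "summable (\<lambda>k. \<bar>t (k+n)\<bar>)"
          by (rule summable_comparison_test'[OF sg2]) (use le in auto)
        have "\<bar>\<Sum>k. t (k+n)\<bar> \<le> (\<Sum>k. \<bar>t (k+n)\<bar>)" by (rule summable_rabs[OF st2])
        also have "\<dots> \<le> (\<Sum>k. (C/b) * q^n * q^k)" by (rule suminf_le[OF le st2 sg2])
        also have "\<dots> = (C/b) * q^n * (\<Sum>k. q^k)"
          by (rule suminf_mult[OF summable_geometric]) (use q in auto)
        also have "\<dots> = (C/b) * q^n * (1/(1-q))" using q by (subst suminf_geometric) auto
        also have "\<dots> = B * q^n" by (simp add: B_def)
        finally show ?thesis .
      qed
      have part: "(\<Sum>k<n. t k) = S - (\<Sum>k. t (k+n))" for n
        using suminf_split_initial_segment[OF st, of n] by (simp add: S_def)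
      have partb: "\<bar>\<Sum>k<n. t k\<bar> \<le> 2*B" for n
      proof -
        have "\<bar>S\<bar> \<le> B" using tail[of 0] by (simp add: S_def)
        moreover have "B*q^n \<le> B" using q B0 by (simp add: mult_left_le power_le_one)
        ultimately show ?thesis using part[of n] tail[of n] by linarith
      qed
      have Wform: "W n = b^n * (u4 + u2 * (\<Sum>k<n. t k))" for n
      proof (induction n)
        case 0 then show ?case by (simp add: W0)
      next
        case (Suc n)
        have e: "b^(Suc n) * t n = a^n * H n" using ab \<open>0<a\<close>
          by (simp add: t_def q_def power_divide field_simps)
        have "W (Suc n) = H n * (a^n*u2) + b * (b^n * (u4 + u2 * (\<Sum>k<n. t k)))"
          using Wsuc[of n] B Suc by simp
        also have "\<dots> = b^(Suc n) * (u4 + u2 * (\<Sum>k<n. t k)) + u2 * (b^(Suc n) * t n)"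
          using e by (simp add: algebra_simps)
        also have "\<dots> = b^(Suc n) * (u4 + u2 * (\<Sum>k<Suc n. t k))"
          by (simp add: algebra_simps)
        finally show ?case .
      qed
      define z where "z = u4 + S*u2"
      show ?thesis
      proof (cases "z = 0")
        case False
        have lam: "lamv H a b v = ln b" using B ab False by (simp add: lamv_def v_eq S_eq z_def)
        have lim: "(\<lambda>n. \<bar>u4 + u2 * (\<Sum>k<n. t k)\<bar>) \<longlonglongrightarrow> \<bar>z\<bar>"
          unfolding z_def using summable_LIMSEQ[OF st]
          by (intro tendsto_rabs tendsto_add tendsto_const) (auto simp: S_def mult.commute intro: tendsto_mult)
        have z2: "\<bar>z\<bar>/2 > 0" using False by simp
        have ev: "eventually (\<lambda>n. \<bar>z\<bar>/2 < \<bar>u4 + u2 * (\<Sum>k<n. t k)\<bar>) sequentially"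
          using order_tendstoD(1)[OF lim, of "\<bar>z\<bar>/2"] False by simp
        define K where "K = \<bar>u2\<bar>+\<bar>u4\<bar>+\<bar>u2\<bar>*(2*B)"
        have K0: "K \<ge> 0" using B0 by (simp add: K_def)
        have "(\<lambda>n. ln (norm (Tv G H a b n v))/real n) \<longlonglongrightarrow> ln b"
        proof (rule lyap_sq[OF z2, of b _ K])
          show "eventually (\<lambda>n. \<bar>z\<bar>/2*b^n \<le> norm (Tv G H a b n v) \<and> norm (Tv G H a b n v) \<le> K*(real n+1)*b^n) sequentially"
            using ev
          proof eventually_elim
            case (elim n)
            have absW: "\<bar>W n\<bar> = b^n * \<bar>u4 + u2 * (\<Sum>k<n. t k)\<bar>" using ab by (simp add: Wform abs_mult)
            have "\<bar>z\<bar>/2*b^n \<le> \<bar>W n\<bar>" unfolding absW using elim ab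
              by (simp add: mult.commute mult_left_mono)
            then have lo: "\<bar>z\<bar>/2*b^n \<le> norm (Tv G H a b n v)" using nge(4)[of n] by linarith
            have "a^n \<le> b^n" using ab \<open>0<a\<close> by (intro power_mono) auto
            then have "a^n*\<bar>u2\<bar> \<le> b^n*\<bar>u2\<bar>" by (intro mult_right_mono) auto
            moreover have "\<bar>u4 + u2 * (\<Sum>k<n. t k)\<bar> \<le> \<bar>u4\<bar> + \<bar>u2\<bar>*(2*B)"
            proof -
              have "\<bar>u2 * (\<Sum>k<n. t k)\<bar> \<le> \<bar>u2\<bar>*(2*B)" using partb[of n] by (simp add: abs_mult mult_left_mono)
              then show ?thesis by (smt (verit) abs_triangle_ineq)
            qed
            then have "\<bar>W n\<bar> \<le> b^n * (\<bar>u4\<bar> + \<bar>u2\<bar>*(2*B))" unfolding absW using ab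
              by (intro mult_left_mono) auto
            ultimately have "norm (Tv G H a b n v) \<le> K*b^n"
              using nleB[of n] by (simp add: K_def algebra_simps)
            then have "norm (Tv G H a b n v) \<le> K*(real n+1)*b^n"
              by (rule mono_n1[OF K0, rotated]) (use ab in auto)
            then show ?case using lo by blast
          qed
        qed (use ab in auto)
        then show ?thesis using lam by simp
      next
        case True
        have lam: "lamv H a b v = ln a" using B ab True by (simp add: lamv_def v_eq S_eq z_def)
        define K where "K = \<bar>u2\<bar>+\<bar>u2\<bar>*B"
        have K0: "K \<ge> 0" using B0 by (simp add: K_def)
        have "(\<lambda>n. ln (norm (Tv G H a b n v))/real n) \<longlonglongrightarrow> ln a"
        proof (rule lyap_sq[OF u2, of a _ K])
          show "eventually (\<lambda>n. \<bar>u2\<bar>*a^n \<le> norm (Tv G H a b n v) \<and> norm (Tv G H a b n v) \<le> K*(real n+1)*a^n) sequentially"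
          proof (intro always_eventually allI conjI)
            fix n
            show "\<bar>u2\<bar>*a^n \<le> norm (Tv G H a b n v)" using nge(2)[of n] by (simp add: mult.commute)
            have "W n = b^n * (u4 + u2 * (S - (\<Sum>k. t (k+n))))"
              using Wform[of n] part[of n] by simp
            also have "\<dots> = b^n * (u4 + S*u2) - b^n * u2 * (\<Sum>k. t (k+n))"
              by (simp add: algebra_simps)
            also have "\<dots> = - (b^n * u2 * (\<Sum>k. t (k+n)))"
              using True by (simp add: z_def)
            finally have "W n = - (b^n * u2 * (\<Sum>k. t (k+n)))" .
            then have "\<bar>W n\<bar> = b^n * \<bar>u2\<bar> * \<bar>\<Sum>k. t (k+n)\<bar>" using ab by (simp add: abs_mult)
            also have "\<dots> \<le> b^n * \<bar>u2\<bar> * (B * q^n)" using tail[of n] ab by (intro mult_left_mono) auto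
            also have "\<dots> = \<bar>u2\<bar>*B*a^n" using ab by (simp add: q_def power_divide field_simps)
            finally have "\<bar>W n\<bar> \<le> \<bar>u2\<bar>*B*a^n" .
            then have "norm (Tv G H a b n v) \<le> K*a^n"
              using nleB[of n] by (simp add: K_def algebra_simps)
            then show "norm (Tv G H a b n v) \<le> K*(real n+1)*a^n"
              by (rule mono_n1[OF K0, rotated]) (use ab in auto)
          qed
        qed (use ab in auto)
        then show ?thesis using lam by simp
      qed
    qed
  next
    case Cc
    have u4: "u4 \<noteq> 0" using v Cc v_eq by (auto simp: zero_prod_def)
    have Wn: "W n = b^n * u4" for n
      by (induction n) (auto simp: W0 Wsuc Cc)
    have lam: "lamv H a b v = ln b" using Cc by (simp add: lamv_def v_eq)
    have "(\<lambda>n. ln (norm (Tv G H a b n v))/real n) \<longlonglongrightarrow> ln b"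
    proof (rule lyap_sq[of "\<bar>u4\<bar>" b _ "\<bar>u4\<bar>"])
      show "eventually (\<lambda>n. \<bar>u4\<bar>*b^n \<le> norm (Tv G H a b n v) \<and> norm (Tv G H a b n v) \<le> \<bar>u4\<bar>*(real n+1)*b^n) sequentially"
      proof (intro always_eventually allI conjI)
        fix n
        show "\<bar>u4\<bar>*b^n \<le> norm (Tv G H a b n v)" using nge(4)[of n] ab by (simp add: Wn abs_mult mult.commute)
        have "norm (Tv G H a b n v) \<le> \<bar>u4\<bar>*b^n" using nle[of n] ab by (simp add: Wn Cc abs_mult mult.commute)
        also have "\<dots> \<le> \<bar>u4\<bar>*(real n+1)*b^n" using ab
          by (simp add: mult_right_mono mult_left_mono mult.assoc)
        finally show "norm (Tv G H a b n v) \<le> \<bar>u4\<bar>*(real n+1)*b^n" .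
      qed
    qed (use u4 ab in auto)
    then show ?thesis using lam by simp
  qed
qed




lemma span_e24: "span {((0,1),(0,0)), ((0,0),(0,1))} = {v::pt. fst (fst v) = 0 \<and> fst (snd v) = 0}"
proof -
  have "span {((0,1),(0,0)), ((0,0),(0,1))} = {x::pt. \<exists>k. x - k *\<^sub>R ((0,1),(0,0)) \<in> range (\<lambda>j. j *\<^sub>R ((0,0),(0,1)))}"
    by (simp add: span_insert span_singleton image_iff)
  also have "\<dots> = {v::pt. fst (fst v) = 0 \<and> fst (snd v) = 0}"
  proof (intro set_eqI iffI)
    fix x :: pt assume "x \<in> {x::pt. \<exists>k. x - k *\<^sub>R ((0,1),(0,0)) \<in> range (\<lambda>j. j *\<^sub>R ((0,0),(0,1)))}"
    then obtain k j where "x - k *\<^sub>R ((0,1),(0,0)) = j *\<^sub>R ((0,0),(0,1))" by auto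
    then have "x = k *\<^sub>R ((0,1),(0,0)) + j *\<^sub>R ((0,0),(0,1))" by (simp add: algebra_simps)
    then show "x \<in> {v::pt. fst (fst v) = 0 \<and> fst (snd v) = 0}" by simp
  next
    fix x :: pt assume "x \<in> {v::pt. fst (fst v) = 0 \<and> fst (snd v) = 0}"
    then obtain u2 u4 where x: "x = ((0,u2),(0,u4))" by (metis (mono_tags, lifting) mem_Collect_eq prod.collapse)
    have "x - u2 *\<^sub>R ((0,1),(0,0)) = u4 *\<^sub>R ((0,0),(0,1))" by (simp add: x zero_prod_def)
    then show "x \<in> {x::pt. \<exists>k. x - k *\<^sub>R ((0,1),(0,0)) \<in> range (\<lambda>j. j *\<^sub>R ((0,0),(0,1)))}" by blast
  qed
  finally show ?thesis .
qed

lemma dim_e24: "dim {v::pt. fst (fst v) = 0 \<and> fst (snd v) = 0} = 2"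
proof -
  have ind: "independent {((0,1),(0,0)), ((0,0),(0,1)) :: pt}"
    by (auto simp: independent_insert span_singleton zero_prod_def)
  have "dim {v::pt. fst (fst v) = 0 \<and> fst (snd v) = 0} = dim {((0,1),(0,0)), ((0,0),(0,1)) :: pt}"
    by (simp flip: span_e24)
  also have "\<dots> = 2" by (simp add: dim_eq_card_independent[OF ind])
  finally show ?thesis .
qed

lemma dim_line:
  fixes x :: pt assumes hx: "x \<noteq> 0" shows "dim (range (\<lambda>k. k *\<^sub>R x)) = 1"
proof -
  have ind: "independent {x}" using hx by (simp add: independent_insert)
  have "dim (range (\<lambda>k. k *\<^sub>R x)) = dim {x}" using hx by (simp flip: span_singleton)
  also have "\<dots> = 1" using hx by (simp add: dim_eq_card_independent[OF ind])
  finally show ?thesis .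
qed

lemma spec_Tv:
  assumes ab: "0<a" "a<1/2" "0<b" "b<1/2"
    and GH: "\<And>k. \<bar>G k\<bar> \<le> C" "\<And>k. \<bar>H k\<bar> \<le> C"
    and T: "\<And>n v. tan_iter F DF n p v = Tv G H a b n v"
  shows "has_lyap_spectrum F DF p {#ln 2, ln 2, ln a, ln b#}"
proof -
  have conv: "v \<noteq> 0 \<Longrightarrow> (\<lambda>n. ln (norm (tan_iter F DF n p v))/real n) \<longlonglongrightarrow> lamv H a b v" for v
    unfolding T by (rule conv_lam[OF ab GH])
  have ly: "v \<noteq> 0 \<Longrightarrow> lyap F DF p v = lamv H a b v" for v
    unfolding lyap_def by (rule limI[OF conv])
  have la: "ln a < 0" "ln b < 0" "ln 2 > (0::real)" using ab by auto
  define S where "S = Sser H a b"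
  have E: "{v. v = 0 \<or> lyap F DF p v \<le> c} = {v. v = 0 \<or> lamv H a b v \<le> c}" for c
  proof (intro set_eqI)
    fix v :: pt
    show "v \<in> {v. v = 0 \<or> lyap F DF p v \<le> c} \<longleftrightarrow> v \<in> {v. v = 0 \<or> lamv H a b v \<le> c}"
      by (cases "v = 0") (auto simp: ly)
  qed
  have lv: "lamv H a b ((u1,u2),(u3,u4)) = (if u1 \<noteq> 0 \<or> u3 \<noteq> 0 then ln 2
     else if u2 \<noteq> 0 \<and> (b \<le> a \<or> u4 + S * u2 = 0) then ln a else ln b)" for u1 u2 u3 u4
    by (simp add: lamv_def S_def)
  have dimc: "dim {v. v = 0 \<or> lamv H a b v \<le> c} = size (filter_mset (\<lambda>l. l \<le> c) {#ln 2, ln 2, ln a, ln b#})" for c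
  proof -
    consider (c1) "ln 2 \<le> c" | (c2) "c < ln 2" "ln a \<le> c" "ln b \<le> c" | (c3) "c < ln a" "c < ln b"
      | (c4) "ln b \<le> c" "c < ln a" | (c5) "ln a \<le> c" "c < ln b" by linarith
    then show ?thesis
    proof cases
      case c1
      have "{v. v = 0 \<or> lamv H a b v \<le> c} = UNIV"
      proof (intro set_eqI iffI)
        fix v :: pt
        obtain u1 u2 u3 u4 where v: "v = ((u1,u2),(u3,u4))" by (metis prod.collapse)
        have "ln a \<le> c" "ln b \<le> c" using c1 la by linarith+
        then show "v \<in> {v. v = 0 \<or> lamv H a b v \<le> c}" using c1 by (auto simp: v lv)
      qed auto
      moreover have "ln a \<le> c" "ln b \<le> c" using c1 la by linarith+
      ultimately show ?thesis using c1 by simp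
    next
      case c2
      have "{v. v = 0 \<or> lamv H a b v \<le> c} = {v::pt. fst (fst v) = 0 \<and> fst (snd v) = 0}"
      proof (intro set_eqI)
        fix v :: pt
        obtain u1 u2 u3 u4 where v: "v = ((u1,u2),(u3,u4))" by (metis prod.collapse)
        show "v \<in> {v. v = 0 \<or> lamv H a b v \<le> c} \<longleftrightarrow> v \<in> {v::pt. fst (fst v) = 0 \<and> fst (snd v) = 0}"
          using c2 la by (auto simp: v lv zero_prod_def)
      qed
      then show ?thesis using c2 dim_e24 by simp
    next
      case c3
      have l2c: "c < ln 2" using c3 la by linarith
      have "{v. v = 0 \<or> lamv H a b v \<le> c} = {0}"
      proof (intro set_eqI)
        fix v :: pt
        obtain u1 u2 u3 u4 where v: "v = ((u1,u2),(u3,u4))" by (metis prod.collapse)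
        show "v \<in> {v. v = 0 \<or> lamv H a b v \<le> c} \<longleftrightarrow> v \<in> {0}"
          using c3 la l2c by (auto simp: v lv zero_prod_def)
      qed
      moreover have "c < ln 2" using c3 la by linarith
      ultimately show ?thesis using c3 by simp
    next
      case c4
      have l2c: "c < ln 2" using c4 la by linarith
      have ba: "b < a" using c4 ab by (metis less_le_trans ln_less_cancel_iff not_less)
      have "{v. v = 0 \<or> lamv H a b v \<le> c} = range (\<lambda>k. k *\<^sub>R (((0,0),(0,1))::pt))"
      proof (intro set_eqI)
        fix v :: pt
        obtain u1 u2 u3 u4 where v: "v = ((u1,u2),(u3,u4))" by (metis prod.collapse)
        have "v \<in> {v. v = 0 \<or> lamv H a b v \<le> c} \<longleftrightarrow> u1 = 0 \<and> u2 = 0 \<and> u3 = 0"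
          using c4 la ba l2c by (auto simp: v lv zero_prod_def)
        also have "\<dots> \<longleftrightarrow> v \<in> range (\<lambda>k. k *\<^sub>R (((0,0),(0,1))::pt))"
          by (auto simp: v image_iff)
        finally show "v \<in> {v. v = 0 \<or> lamv H a b v \<le> c} \<longleftrightarrow> v \<in> range (\<lambda>k. k *\<^sub>R (((0,0),(0,1))::pt))" .
      qed
      moreover have "dim (range (\<lambda>k. k *\<^sub>R (((0,0),(0,1))::pt))) = 1"
        by (rule dim_line) (simp add: zero_prod_def)
      moreover have "c < ln 2" using c4 la by linarith
      ultimately show ?thesis using c4 by simp
    next
      case c5
      have l2c: "c < ln 2" using c5 la by linarith
      have ba: "a < b" using c5 ab by (metis less_le_trans ln_less_cancel_iff not_less)
      have "{v. v = 0 \<or> lamv H a b v \<le> c} = range (\<lambda>k. k *\<^sub>R (((0,1),(0,-S))::pt))"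
      proof (intro set_eqI)
        fix v :: pt
        obtain u1 u2 u3 u4 where v: "v = ((u1,u2),(u3,u4))" by (metis prod.collapse)
        have "v \<in> {v. v = 0 \<or> lamv H a b v \<le> c} \<longleftrightarrow> u1 = 0 \<and> u3 = 0 \<and> u4 + S * u2 = 0"
          using c5 la ba l2c by (auto simp: v lv zero_prod_def)
        also have "\<dots> \<longleftrightarrow> v \<in> range (\<lambda>k. k *\<^sub>R (((0,1),(0,-S))::pt))"
          by (auto simp: v image_iff algebra_simps)
        finally show "v \<in> {v. v = 0 \<or> lamv H a b v \<le> c} \<longleftrightarrow> v \<in> range (\<lambda>k. k *\<^sub>R (((0,1),(0,-S))::pt))" .
      qed
      moreover have "dim (range (\<lambda>k. k *\<^sub>R (((0,1),(0,-S))::pt))) = 1"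
        by (rule dim_line) (simp add: zero_prod_def)
      moreover have "c < ln 2" using c5 la by linarith
      ultimately show ?thesis using c5 by simp
    qed
  qed
  show ?thesis
    unfolding has_lyap_spectrum_def
  proof (intro conjI allI impI)
    fix v :: pt assume "v \<noteq> 0"
    then show "convergent (\<lambda>n. ln (norm (tan_iter F DF n p v)) / real n)"
      using conv convergentI by blast
  next
    fix c
    show "dim {v. v = 0 \<or> lyap F DF p v \<le> c} = size (filter_mset (\<lambda>l. l \<le> c) {#ln 2, ln 2, ln a, ln b#})"
      unfolding E by (rule dimc)
  qed
qed




definition Dy :: "real set" where "Dy = range (\<lambda>(k::nat, m::int). real_of_int m / 2^k)"

lemma Dy_null: "Dy \<in> null_sets lborel"
  unfolding Dy_def by (intro countable_imp_null_set_lborel countable_image) simp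

lemma fst_Bmap: "fst (Bmap a q) = (if fst q < 1/2 then 2*fst q else 2*fst q - 1)"
  by (cases q) (simp add: Bmap_def)

lemma orbit_inv:
  assumes "0 \<le> x" "x < 1"
  shows "fst ((Bmap a ^^ k) (x,y)) \<in> {0..<1} \<and> (\<exists>m::int. fst ((Bmap a ^^ k) (x,y)) = 2^k*x - m)"
proof (induction k)
  case 0 then show ?case using assms by (auto intro: exI[of _ 0])
next
  case (Suc k)
  define r where "r = fst ((Bmap a ^^ k) (x,y))"
  from Suc obtain m :: int where r: "r \<in> {0..<1}" "r = 2^k*x - m" by (auto simp: r_def)
  have e: "fst ((Bmap a ^^ Suc k) (x,y)) = (if r < 1/2 then 2*r else 2*r - 1)"
    by (simp add: fst_Bmap r_def)
  show ?case
  proof (cases "r < 1/2")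
    case True
    have "2*r = 2^Suc k*x - of_int (2*m)" using r by simp
    then show ?thesis using e True r by (auto intro!: exI[of _ "2*m"])
  next
    case False
    have "2*r - 1 = 2^Suc k*x - of_int (2*m+1)" using r by simp
    then show ?thesis using e False r by (auto intro!: exI[of _ "2*m+1"])
  qed
qed

lemma orbit_good:
  assumes "0 \<le> x" "x < 1" "x \<notin> Dy"
  shows "fst ((Bmap a ^^ k) (x,y)) \<in> {0<..<1}"
proof -
  obtain m :: int where m: "fst ((Bmap a ^^ k) (x,y)) \<in> {0..<1}" "fst ((Bmap a ^^ k) (x,y)) = 2^k*x - m"
    using orbit_inv[OF assms(1,2)] by blast
  have "fst ((Bmap a ^^ k) (x,y)) \<noteq> 0"
  proof
    assume "fst ((Bmap a ^^ k) (x,y)) = 0"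
    then have "x = real_of_int m / 2^k" using m by (simp add: field_simps)
    then have "x \<in> Dy" unfolding Dy_def by (auto intro!: image_eqI[of _ _ "(k,m)"])
    then show False using assms by simp
  qed
  then show ?thesis using m by auto
qed

lemma det:
  assumes ab: "0 < \<alpha>" "\<alpha> < 1/2" "0 < \<beta>" "\<beta> < 1/2" and cb: "Cb1 g gx gy"
    and hp: "\<And>k. fst ((Bmap \<alpha> ^^ k) (fst p)) \<in> {0<..<1}"
  shows "has_lyap_spectrum (Bg \<alpha> \<beta> g) (DBg \<alpha> \<beta> gx gy) p {#ln 2, ln 2, ln \<alpha>, ln \<beta>#}"
proof -
  obtain C where C: "\<And>q. q \<in> intM \<Longrightarrow> \<bar>gx q\<bar> \<le> C \<and> \<bar>gy q\<bar> \<le> C"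
    using cb unfolding Cb1_def by blast
  have inM: "(Bmap \<alpha> ^^ k) (fst p) \<in> intM" for k
    using hp[of k] by (cases "(Bmap \<alpha> ^^ k) (fst p)") (auto simp: intM_def)
  show ?thesis
    by (rule spec_Tv[OF ab, of "\<lambda>k. gx ((Bmap \<alpha> ^^ k) (fst p))" C "\<lambda>k. gy ((Bmap \<alpha> ^^ k) (fst p))"])
      (use C inM tan_iter_Tv in auto)
qed

lemma null_times_UNIV:
  assumes "A \<in> null_sets (lborel :: 'a::euclidean_space measure)"
  shows "A \<times> UNIV \<in> null_sets (lborel :: ('a \<times> 'b::euclidean_space) measure)"
proof -
  have "emeasure (lborel \<Otimes>\<^sub>M lborel) (A \<times> (UNIV::'b set)) = emeasure lborel A * emeasure lborel (UNIV::'b set)"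
    using assms by (intro lborel.emeasure_pair_measure_Times) auto
  then have "emeasure (lborel \<Otimes>\<^sub>M lborel) (A \<times> (UNIV::'b set)) = 0" using null_setsD1[OF assms] by simp
  moreover have "A \<times> (UNIV::'b set) \<in> sets (lborel \<Otimes>\<^sub>M lborel)" using assms by auto
  ultimately have "A \<times> (UNIV::'b set) \<in> null_sets (lborel \<Otimes>\<^sub>M lborel)" by (simp add: null_sets_def)
  then show ?thesis by (simp only: lborel_prod)
qed

lemma distr_le:
  assumes "A \<in> sets N"
  shows "emeasure (distr M N f) A \<le> emeasure M (f -` A \<inter> space M)"
  using assms unfolding distr_def by (auto simp: emeasure_measure_of_conv sets.sigma_sets_eq)

lemma cantor_fin: "finite_measure (cantor_measure a)"
proof (rule finite_measureI)
  let ?P = "\<Pi>\<^sub>M i\<in>(UNIV :: nat set). measure_pmf (bernoulli_pmf (1/2))"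
  interpret P: prob_space ?P by (intro prob_space_PiM prob_space_measure_pmf)
  have "emeasure (cantor_measure a) (space (cantor_measure a)) \<le> emeasure ?P (space ?P)"
    unfolding cantor_measure_def by (rule order_trans[OF distr_le]) auto
  then show "emeasure (cantor_measure a) (space (cantor_measure a)) \<noteq> \<infinity>"
    using P.emeasure_space_1 by (auto simp: top_unique)
qed

lemma leb01_fin: "finite_measure leb01"
proof (rule finite_measureI)
  have "emeasure leb01 (space leb01) = emeasure lborel {0..<1::real}"
    unfolding leb01_def by (subst emeasure_restrict_space) (auto simp: space_restrict_space)
  then show "emeasure leb01 (space leb01) \<noteq> \<infinity>" by simp
qed

theorem lemma3p6:
  fixes \<alpha> \<beta> :: real and g gx gy :: "real \<times> real \<Rightarrow> real"
  assumes "0 < \<alpha>" "\<alpha> < 1/2" "0 < \<beta>" "\<beta> < 1/2"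
    and "Cb1 g gx gy"
  shows "(AE p in lborel. p \<in> MM \<longrightarrow>
            has_lyap_spectrum (Bg \<alpha> \<beta> g) (DBg \<alpha> \<beta> gx gy) p {#ln 2, ln 2, ln \<alpha>, ln \<beta>#})
       \<and> (AE p in mu_g \<alpha> \<beta> g.
            has_lyap_spectrum (Bg \<alpha> \<beta> g) (DBg \<alpha> \<beta> gx gy) p {#ln 2, ln 2, ln \<alpha>, ln \<beta>#})"
proof
  let ?S = "\<lambda>p. has_lyap_spectrum (Bg \<alpha> \<beta> g) (DBg \<alpha> \<beta> gx gy) p {#ln 2, ln 2, ln \<alpha>, ln \<beta>#}"
  have good: "?S p" if "0 \<le> fst (fst p)" "fst (fst p) < 1" "fst (fst p) \<notin> Dy" for p :: pt
  proof (rule det[OF assms])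
    fix k
    obtain x y where xy: "fst p = (x,y)" by fastforce
    show "fst ((Bmap \<alpha> ^^ k) (fst p)) \<in> {0<..<1}"
      unfolding xy by (rule orbit_good) (use that xy in auto)
  qed
  show "AE p in lborel. p \<in> MM \<longrightarrow> ?S p"
  proof (rule AE_I')
    show "(Dy \<times> UNIV) \<times> UNIV \<in> null_sets (lborel :: pt measure)"
      by (intro null_times_UNIV Dy_null)
    show "{p \<in> space lborel. \<not> (p \<in> MM \<longrightarrow> ?S p)} \<subseteq> (Dy \<times> UNIV) \<times> UNIV"
    proof
      fix p :: pt assume "p \<in> {p \<in> space lborel. \<not> (p \<in> MM \<longrightarrow> ?S p)}"
      then have "p \<in> MM" "\<not> ?S p" by auto
      then have r: "0 \<le> fst (fst p)" "fst (fst p) < 1" by (auto simp: MM_def)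
      have "fst (fst p) \<in> Dy"
      proof (rule ccontr)
        assume "fst (fst p) \<notin> Dy"
        then show False using good[OF r] \<open>\<not> ?S p\<close> by blast
      qed
      then show "p \<in> (Dy \<times> UNIV) \<times> UNIV" by (cases p) auto
    qed
  qed
  define X where "X = Dy \<union> - {0..<1::real}"
  define N2 where "N2 = {p::pt. fst (fst p) \<in> X}"
  show "AE p in mu_g \<alpha> \<beta> g. ?S p"
  proof (rule AE_I'[where N=N2])
    show "{p \<in> space (mu_g \<alpha> \<beta> g). \<not> ?S p} \<subseteq> N2"
    proof
      fix p assume p: "p \<in> {p \<in> space (mu_g \<alpha> \<beta> g). \<not> ?S p}"
      show "p \<in> N2"
      proof (rule ccontr)
        assume "p \<notin> N2"
        then have "0 \<le> fst (fst p)" "fst (fst p) < 1" "fst (fst p) \<notin> Dy" by (auto simp: N2_def X_def)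
        then show False using good p by blast
      qed
    qed
    have Dys: "Dy \<in> sets borel" using null_setsD2[OF Dy_null] by simp
    have Xs: "X \<in> sets borel" unfolding X_def using Dys by auto
    have m: "(\<lambda>p::pt. fst (fst p)) \<in> borel_measurable lborel"
      by (simp, intro borel_measurable_continuous_onI continuous_intros)
    have N2s: "N2 \<in> sets lborel"
    proof -
      have "N2 = (\<lambda>p::pt. fst (fst p)) -` X \<inter> space lborel" by (auto simp: N2_def)
      then show ?thesis using measurable_sets[OF m Xs] by simp
    qed
    let ?Ca = "cantor_measure \<alpha>" and ?Cb = "cantor_measure \<beta>"
    let ?P1 = "leb01 \<Otimes>\<^sub>M ?Ca" and ?P2 = "leb01 \<Otimes>\<^sub>M ?Cb"
    interpret Fa: finite_measure ?Ca by (rule cantor_fin)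
    interpret F2: finite_measure ?P2 by (intro finite_measure_pair_measure cantor_fin leb01_fin)
    have sp: "space (?P1 \<Otimes>\<^sub>M ?P2) = ({0..<1} \<times> UNIV) \<times> ({0..<1} \<times> UNIV)"
      by (simp add: space_pair_measure leb01_def space_restrict_space cantor_measure_def)
    have hgfst: "fst (fst (hg \<alpha> \<beta> g q)) = fst (fst q)" for q
      by (cases q) (auto simp: hg_def split: prod.splits)
    have pre: "hg \<alpha> \<beta> g -` N2 \<inter> space (?P1 \<Otimes>\<^sub>M ?P2) = ((Dy \<inter> {0..<1}) \<times> UNIV) \<times> ({0..<1} \<times> UNIV)"
      unfolding sp by (auto simp: N2_def X_def hgfst)
    have l01: "{0..<1::real} \<in> sets leb01" by (simp add: leb01_def sets_restrict_space_iff)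
    have Dl: "Dy \<inter> {0..<1} \<in> sets leb01" using Dys by (simp add: leb01_def sets_restrict_space_iff)
    have U: "UNIV \<in> sets (cantor_measure c)" for c by (simp add: cantor_measure_def)
    have e0: "emeasure leb01 (Dy \<inter> {0..<1}) = 0"
    proof -
      have "emeasure leb01 (Dy \<inter> {0..<1}) = emeasure lborel (Dy \<inter> {0..<1})"
        unfolding leb01_def by (subst emeasure_restrict_space) auto
      also have "\<dots> = 0" by (rule null_setsD1, rule null_sets_subset[OF Dy_null]) (use Dys in auto)
      finally show ?thesis .
    qed
    have "emeasure (?P1 \<Otimes>\<^sub>M ?P2) (((Dy \<inter> {0..<1}) \<times> UNIV) \<times> ({0..<1} \<times> UNIV))
        = emeasure ?P1 ((Dy \<inter> {0..<1}) \<times> UNIV) * emeasure ?P2 ({0..<1} \<times> UNIV)"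
      using Dl U l01 by (intro F2.emeasure_pair_measure_Times) auto
    also have "emeasure ?P1 ((Dy \<inter> {0..<1}) \<times> UNIV) = emeasure leb01 (Dy \<inter> {0..<1}) * emeasure ?Ca UNIV"
      using Dl U by (intro Fa.emeasure_pair_measure_Times) auto
    finally have z: "emeasure (?P1 \<Otimes>\<^sub>M ?P2) (hg \<alpha> \<beta> g -` N2 \<inter> space (?P1 \<Otimes>\<^sub>M ?P2)) = 0"
      unfolding pre e0 by simp
    have "emeasure (mu_g \<alpha> \<beta> g) N2 \<le> emeasure (?P1 \<Otimes>\<^sub>M ?P2) (hg \<alpha> \<beta> g -` N2 \<inter> space (?P1 \<Otimes>\<^sub>M ?P2))"
      unfolding mu_g_def by (rule distr_le[OF N2s])
    then have "emeasure (mu_g \<alpha> \<beta> g) N2 = 0" using z by simp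
    moreover have "N2 \<in> sets (mu_g \<alpha> \<beta> g)" using N2s by (simp add: mu_g_def)
    ultimately show "N2 \<in> null_sets (mu_g \<alpha> \<beta> g)" by (simp add: null_sets_def)
  qed
qed


end
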